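(* Let $F$ be a field of characteristic two. If $(A,\sigma)$ is a direct central simple $F$-algebra with orthogonal involution, then $\mathrm{Sym}(A,\sigma)^+$ is a subfield of $A$.
   Context: Involutions are of the first kind. $\mathrm{Alt}(A,\sigma)=\{\sigma(x)-x\mid x\in A\}$, $\mathrm{Sym}(A,\sigma)^+=\{x\in A\mid\sigma(x)=x,\ x^2\in F\}$. $(A,\sigma)$ is called direct if $\sigma(x)x\in\mathrm{Alt}(A,\sigma)$ for $x\in A$ implies $x=0$. *)

theory Defs
  imports Main
begin

text \<open>The algebra A is modelled as the whole carrier of a type 'a :: ring_1.
  The base field F is a subset of A (the image of the structure map), required
  to be a subfield equal to the centre of A.\<close>

definition ring_centre :: "'a::ring_1 set" where
  "ring_centre = {c. \<forall>x. c * x = x * c}"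

definition is_subfield :: "'a::ring_1 set \<Rightarrow> bool" where
  "is_subfield S \<longleftrightarrow> 0 \<in> S \<and> 1 \<in> S \<and> (0::'a) \<noteq> 1 \<and>
     (\<forall>x\<in>S. \<forall>y\<in>S. x + y \<in> S \<and> x - y \<in> S \<and> x * y \<in> S \<and> x * y = y * x) \<and>
     (\<forall>x\<in>S. x \<noteq> 0 \<longrightarrow> (\<exists>y\<in>S. x * y = 1 \<and> y * x = 1))"

definition two_sided_ideal :: "'a::ring_1 set \<Rightarrow> bool" where
  "two_sided_ideal I \<longleftrightarrow> 0 \<in> I \<and> (\<forall>x\<in>I. \<forall>y\<in>I. x + y \<in> I) \<and>
     (\<forall>x\<in>I. \<forall>a. a * x \<in> I \<and> x * a \<in> I)"

definition simple_ring :: "'a::ring_1 itself \<Rightarrow> bool" where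
  "simple_ring _ \<longleftrightarrow> (0::'a) \<noteq> 1 \<and>
     (\<forall>I::'a set. two_sided_ideal I \<longrightarrow> I = {0} \<or> I = UNIV)"

definition fin_dim_over :: "'a::ring_1 set \<Rightarrow> bool" where
  "fin_dim_over F \<longleftrightarrow> (\<exists>B. finite B \<and>
     (\<forall>x. \<exists>c. (\<forall>b\<in>B. c b \<in> F) \<and> x = (\<Sum>b\<in>B. c b * b)))"

definition central_simple_algebra :: "'a::ring_1 set \<Rightarrow> bool" where
  "central_simple_algebra F \<longleftrightarrow> is_subfield F \<and> F = ring_centre \<and>
     simple_ring TYPE('a) \<and> fin_dim_over F"

definition involution_first_kind :: "'a::ring_1 set \<Rightarrow> ('a \<Rightarrow> 'a) \<Rightarrow> bool" where
  "involution_first_kind F \<sigma> \<longleftrightarrow>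
     (\<forall>x y. \<sigma> (x + y) = \<sigma> x + \<sigma> y) \<and>
     (\<forall>x y. \<sigma> (x * y) = \<sigma> y * \<sigma> x) \<and>
     (\<forall>x. \<sigma> (\<sigma> x) = x) \<and>
     (\<forall>c\<in>F. \<sigma> c = c)"

definition Alt :: "('a::ring_1 \<Rightarrow> 'a) \<Rightarrow> 'a set" where
  "Alt \<sigma> = {\<sigma> x - x | x. True}"

definition Sym_plus :: "'a::ring_1 set \<Rightarrow> ('a \<Rightarrow> 'a) \<Rightarrow> 'a set" where
  "Sym_plus F \<sigma> = {x. \<sigma> x = x \<and> x * x \<in> F}"

text \<open>Orthogonal involution in characteristic 2: 1 is not in Alt (KMRT Prop. 2.6).\<close>
definition orthogonal_char2 :: "('a::ring_1 \<Rightarrow> 'a) \<Rightarrow> bool" where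
  "orthogonal_char2 \<sigma> \<longleftrightarrow> (1::'a) \<notin> Alt \<sigma>"

definition direct :: "('a::ring_1 \<Rightarrow> 'a) \<Rightarrow> bool" where
  "direct \<sigma> \<longleftrightarrow> (\<forall>x. \<sigma> x * x \<in> Alt \<sigma> \<longrightarrow> x = 0)"

end

theory Submission
  imports Defs
begin

theorem proposition3p4:
  fixes F :: "'a::ring_1 set" and \<sigma> :: "'a \<Rightarrow> 'a"
  assumes "central_simple_algebra F"
    and "(2::'a) = 0"
    and "involution_first_kind F \<sigma>"
    and "orthogonal_char2 \<sigma>"
    and "direct \<sigma>"
  shows "is_subfield (Sym_plus F \<sigma>)"
proof -
  have sf: "is_subfield F" and FC: "F = ring_centre"
    using assms(1) unfolding central_simple_algebra_def by auto
  have add: "\<And>x y. \<sigma> (x + y) = \<sigma> x + \<sigma> y"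
    and mul: "\<And>x y. \<sigma> (x * y) = \<sigma> y * \<sigma> x"
    and fixF: "\<And>c. c \<in> F \<Longrightarrow> \<sigma> c = c"
    using assms(3) unfolding involution_first_kind_def by auto
  have dir: "\<And>x. \<sigma> x * x \<in> Alt \<sigma> \<Longrightarrow> x = 0"
    using assms(5) unfolding direct_def by auto
  have cen: "\<And>c x. c \<in> F \<Longrightarrow> c * x = x * c" using FC unfolding ring_centre_def by auto
  have two: "\<And>x::'a. x + x = 0"
  proof -
    fix x :: 'a
    have "x + x = 2 * x" by (metis mult_2)
    thus "x + x = 0" using assms(2) by simp
  qed
  have neg: "\<And>x::'a. - x = x" using two by (metis add_eq_0_iff2)
  have subq: "\<And>x y::'a. x - y = x + y" using neg by (metis diff_conv_add_uminus)
  have s0: "\<sigma> 0 = 0" using add[of 0 0] by simp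
  have altI: "\<And>w. \<sigma> w + w \<in> Alt \<sigma>" unfolding Alt_def using subq by (metis (mono_tags, lifting) mem_Collect_eq)
  have F0: "0 \<in> F" and F1: "1 \<in> F" and F01: "(0::'a) \<noteq> 1"
    and Fadd: "\<And>x y. x \<in> F \<Longrightarrow> y \<in> F \<Longrightarrow> x + y \<in> F"
    and Fmul: "\<And>x y. x \<in> F \<Longrightarrow> y \<in> F \<Longrightarrow> x * y \<in> F"
    and Finv: "\<And>x. x \<in> F \<Longrightarrow> x \<noteq> 0 \<Longrightarrow> \<exists>y\<in>F. x * y = 1 \<and> y * x = 1"
    using sf unfolding is_subfield_def by auto
  have comm: "x * y = y * x" if x: "x \<in> Sym_plus F \<sigma>" and y: "y \<in> Sym_plus F \<sigma>" for x y
  proof -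
    have sx: "\<sigma> x = x" and xa: "x * x \<in> F" and sy: "\<sigma> y = y" and yb: "y * y \<in> F"
      using x y unfolding Sym_plus_def by auto
    define z where "z = x * y + y * x"
    have sz: "\<sigma> z = z" unfolding z_def using add mul sx sy by (simp add: add.commute)
    have e1: "x * y * (y * x) = (x * x) * (y * y)"
    proof -
      have "x * y * (y * x) = x * ((y * y) * x)" by (simp add: mult.assoc)
      also have "\<dots> = x * (x * (y * y))" using cen[OF yb] by simp
      finally show ?thesis by (simp add: mult.assoc)
    qed
    have e2: "y * x * (x * y) = (x * x) * (y * y)"
    proof -
      have "y * x * (x * y) = y * ((x * x) * y)" by (simp add: mult.assoc)
      also have "\<dots> = (x * x) * (y * y)" using cen[OF xa] by (metis mult.assoc)
      finally show ?thesis .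
    qed
    have "z * z = x*y*(x*y) + x*y*(y*x) + (y*x*(x*y) + y*x*(y*x))"
      unfolding z_def by (simp add: algebra_simps)
    also have "\<dots> = x*y*(x*y) + y*x*(y*x)" using e1 e2 two by (simp add: add.assoc)
    also have "\<dots> = \<sigma> (x*y*(x*y)) + x*y*(x*y)" using mul sx sy by (simp add: add.commute mult.assoc)
    finally have "\<sigma> z * z \<in> Alt \<sigma>" using sz altI by simp
    hence "z = 0" by (rule dir)
    hence "x * y = - (y * x)" unfolding z_def by (simp add: eq_neg_iff_add_eq_0)
    thus ?thesis using neg by simp
  qed
  show ?thesis unfolding is_subfield_def
  proof (intro conjI ballI impI)
    show "0 \<in> Sym_plus F \<sigma>" using s0 F0 unfolding Sym_plus_def by simp
    show "1 \<in> Sym_plus F \<sigma>" using fixF F1 unfolding Sym_plus_def by simp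
    show "(0::'a) \<noteq> 1" by (rule F01)
  next
    fix x y assume x: "x \<in> Sym_plus F \<sigma>" and y: "y \<in> Sym_plus F \<sigma>"
    have sx: "\<sigma> x = x" and xa: "x * x \<in> F" and sy: "\<sigma> y = y" and yb: "y * y \<in> F"
      using x y unfolding Sym_plus_def by auto
    have c: "x * y = y * x" by (rule comm[OF x y])
    have "(x + y) * (x + y) = x * x + y * y + (x * y + x * y)"
      using c by (simp add: algebra_simps)
    hence "(x + y) * (x + y) = x * x + y * y" using two by simp
    thus xy: "x + y \<in> Sym_plus F \<sigma>" using add sx sy xa yb Fadd unfolding Sym_plus_def by simp
    show "x - y \<in> Sym_plus F \<sigma>" using xy subq[of x y] by metis
    have "(x * y) * (x * y) = (x * x) * (y * y)"
      by (metis c mult.assoc)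
    thus "x * y \<in> Sym_plus F \<sigma>" using mul sx sy c xa yb Fmul unfolding Sym_plus_def by simp
    show "x * y = y * x" by (rule c)
  next
    fix x assume x: "x \<in> Sym_plus F \<sigma>" and nz: "x \<noteq> 0"
    have sx: "\<sigma> x = x" and xa: "x * x \<in> F" using x unfolding Sym_plus_def by auto
    have "x * x \<noteq> 0"
    proof
      assume "x * x = 0"
      hence "\<sigma> x * x \<in> Alt \<sigma>" using sx altI[of 0] s0 by simp
      thus False using dir nz by blast
    qed
    then obtain c where cF: "c \<in> F" and c1: "x * x * c = 1" and c2: "c * (x * x) = 1"
      using Finv[OF xa] by auto
    define y where "y = c * x"
    have xy: "x * y = 1" unfolding y_def using c1 cen[OF cF] by (metis mult.assoc)
    have yx: "y * x = 1" unfolding y_def using c2 by (simp add: mult.assoc)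
    have sy: "\<sigma> y = y" unfolding y_def using mul fixF[OF cF] sx cen[OF cF] by simp
    have "y * y = c * (x * c * x)" unfolding y_def by (simp add: mult.assoc)
    also have "\<dots> = c * (c * (x * x))" using cen[OF cF] by (metis mult.assoc)
    also have "\<dots> = c" using c2 by (simp add: mult.assoc[symmetric])
    finally have "y \<in> Sym_plus F \<sigma>" using sy cF unfolding Sym_plus_def by simp
    thus "\<exists>y\<in>Sym_plus F \<sigma>. x * y = 1 \<and> y * x = 1" using xy yx by blast
  qed
qed

end
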